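(* Let $k\in\mathbb{N}$, $R>0$, $S^k=\{y\in\mathbb{R}^{k+1}:|y|=R\}$, and fix $x\in\mathbb{R}^{k+1}$ with $|x|\neq R$; write $\omega=\omega(x,y)$. For every real $b$ and $\alpha=k/2+ib$, $$\int_{S^k}\omega^{\alpha}\,dS_y=\int_{S^k}\omega^{k/2}\cos(b\ln\omega)\,dS_y .$$ Moreover, for every real $b$ and every $m=0,1,2,\dots$, $$\int_{S^k}\omega^{k/2}(\ln\omega)^{2m+1}\cos(b\ln\omega)\,dS_y=0,\qquad \int_{S^k}\omega^{k/2}(\ln\omega)^{2m}\sin(b\ln\omega)\,dS_y=0,$$ and for every $\alpha\in\mathbb{C}$ $$F(\alpha):=\int_{S^k}\omega^\alpha\,dS_y=\sum_{m=0}^\infty\frac{(\alpha-k/2)^{2m}}{(2m)!}\int_{S^k}\omega^{k/2}(\ln\omega)^{2m}\,dS_y,$$ which is the Taylor expansion of the entire function $F$ at $\alpha=k/2$.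
   Context: For $x\neq y$ in $\mathbb{R}^{k+1}$, $\omega(x,y)=\left|\dfrac{|x|^2-|y|^2}{|x-y|^2}\right|$. $dS_y$ is the surface measure on $S^k$. For $|x|\neq R$ and $y\in S^k$, $\omega>0$ and $\omega^\alpha=e^{\alpha\ln\omega}$. *)

theory Defs
  imports "HOL-Analysis.Analysis"
begin

definition omega :: "'a::real_normed_vector \<Rightarrow> 'a \<Rightarrow> real" where
  "omega x y = \<bar>(norm x ^ 2 - norm y ^ 2) / (norm (x - y)) ^ 2\<bar>"

text \<open>Surface measure on the sphere of radius R in an n-dimensional Euclidean space
  (n = DIM('a)), realised as the cone measure: sigma(A) = (n/R) * Lebesgue measure of
  the cone {t y. y in A, 0 < t <= 1}, i.e. the push-forward of Lebesgue measure on the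
  punctured closed ball under radial projection z |-> (R/|z|) z, scaled by n/R.\<close>
definition sphere_measure :: "real \<Rightarrow> 'a::euclidean_space measure" where
  "sphere_measure R =
     scale_measure (ennreal (real DIM('a) / R))
       (distr (restrict_space lborel (cball 0 R - {0}))
              (restrict_space borel (sphere 0 R))
              (\<lambda>z. (R / norm z) *\<^sub>R z))"

definition cpow_pos :: "real \<Rightarrow> complex \<Rightarrow> complex" where
  "cpow_pos w a = exp (a * complex_of_real (ln w))"

end

theory Submission
  imports Defs "HOL-Analysis.Analysis"
begin


definition invm :: "'a::real_inner \<Rightarrow> real \<Rightarrow> 'a \<Rightarrow> 'a" where
  "invm p c y = p + (c / (norm (y - p))^2) *\<^sub>R (y - p)"

lemma norm_sq_expand: "(norm (a - b))^2 = (norm a)^2 - 2 * (a \<bullet> b) + (norm b)^2"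
  for a b :: "'a::real_inner"
  by (simp add: power2_norm_eq_inner inner_diff_left inner_diff_right inner_commute)

lemma norm_sq_add_scale: "(norm (a + t *\<^sub>R w))^2 = (norm a)^2 + 2 * t * (a \<bullet> w) + t^2 * (norm w)^2"
  for a w :: "'a::real_inner"
  unfolding power2_norm_eq_inner by (simp add: inner_add_left inner_add_right inner_commute power2_eq_square algebra_simps)

lemma invm_norm:
  fixes u p :: "'a::real_inner"
  assumes "norm u = R" "c = (norm p)^2 - R^2" "u \<noteq> p"
  shows "norm (invm p c u) = R"
proof -
  define d where "d = (norm (u - p))^2"
  have d0: "d > 0" using assms(3) by (simp add: d_def)
  have dd: "d = R^2 - 2 * (u \<bullet> p) + (norm p)^2" using assms(1) by (simp add: d_def norm_sq_expand)
  have "(norm (invm p c u))^2 = (norm p)^2 + 2 * (c/d) * (p \<bullet> (u - p)) + (c/d)^2 * d"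
    unfolding invm_def norm_sq_add_scale d_def by simp
  also have "\<dots> = R^2"
    using d0 dd assms(2) apply (simp add: inner_diff_right inner_commute field_simps power2_eq_square dot_square_norm)
    by algebra
  finally show ?thesis using assms(1) 
    by (metis norm_ge_zero power2_eq_imp_eq)
qed

lemma invm_minus: "invm p c u - p = (c / (norm (u - p))^2) *\<^sub>R (u - p)"
  by (simp add: invm_def)

lemma invm_dist: 
  fixes u p :: "'a::real_inner"
  assumes "u \<noteq> p" "c > 0"
  shows "(norm (invm p c u - p))^2 = c^2 / (norm (u - p))^2"
proof -
  have "norm (u - p) > 0" using assms by simp
  then show ?thesis using assms
    unfolding invm_minus norm_scaleR by (simp add: power2_eq_square field_simps)
qed

lemma invm_invol:
  fixes u p :: "'a::real_inner"
  assumes "u \<noteq> p" "c > 0"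
  shows "invm p c (invm p c u) = u"
proof -
  have "invm p c (invm p c u) = p + (c / (c^2 / (norm (u - p))^2)) *\<^sub>R ((c / (norm (u - p))^2) *\<^sub>R (u - p))"
    unfolding invm_def[of p c "invm p c u"] invm_dist[OF assms] by (simp add: invm_minus)
  also have "\<dots> = u" using assms by (simp add: power2_eq_square)
  finally show ?thesis .
qed

definition Wf :: "'a::real_inner \<Rightarrow> real \<Rightarrow> 'a \<Rightarrow> real" where
  "Wf p c u = c / (norm (u - p))^2"

lemma Wf_invm:
  fixes u p :: "'a::real_inner"
  assumes "u \<noteq> p" "c > 0"
  shows "Wf p c (invm p c u) = 1 / Wf p c u"
  unfolding Wf_def invm_dist[OF assms] using assms by (simp add: power2_eq_square)

lemma omega_out:
  fixes x u :: "'a::real_inner"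
  assumes "norm u = R" "norm x > R" "R > 0"
  shows "omega x u = Wf x ((norm x)^2 - R^2) u"
proof -
  have "R^2 < (norm x)^2" using assms by (simp add: power_strict_mono)
  then show ?thesis using assms(1) unfolding omega_def Wf_def by (simp add: norm_minus_commute)
qed

lemma omega_in:
  fixes x u :: "'a::real_inner"
  assumes "norm u = R" "norm x < R" "x \<noteq> 0" "R > 0"
  defines "p \<equiv> (R^2 / (norm x)^2) *\<^sub>R x"
  shows "omega x u = Wf p ((norm p)^2 - R^2) u"
proof -
  have nx: "norm x > 0" using assms by simp
  have x2: "(norm x)^2 < R^2" using assms nx by (simp add: power_strict_mono)
  have np: "norm p = R^2 / norm x" unfolding p_def using nx by (simp add: power2_eq_square)
  have e1: "(norm (u - p))^2 = R^2 - 2 * (R^2 / (norm x)^2) * (u \<bullet> x) + R^4 / (norm x)^2"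
    unfolding norm_sq_expand np p_def using assms(1) nx
    by (simp add: power2_eq_square field_simps power4_eq_xxxx)
  have e2: "(norm (x - u))^2 = (norm x)^2 - 2 * (u \<bullet> x) + R^2"
    unfolding norm_sq_expand using assms(1) by (simp add: inner_commute)
  have e3: "(norm (u - p))^2 = (R^2 / (norm x)^2) * (norm (x - u))^2"
    unfolding e1 e2 using nx by (simp add: field_simps power2_eq_square power4_eq_xxxx)
  have ne: "x \<noteq> u" using assms by auto
  have "omega x u = (R^2 - (norm x)^2) / (norm (x - u))^2"
    unfolding omega_def using x2 assms(1) by simp
  also have "\<dots> = Wf p ((norm p)^2 - R^2) u"
    unfolding Wf_def e3 np using nx ne assms(4) by (simp add: field_simps power2_eq_square)
  finally show ?thesis .
qed


lemma det_shear_axis: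
  fixes w :: "real^'n::{finite,wellorder}"
  assumes le: "\<And>i. i0 \<le> i"
  shows "det (matrix (\<lambda>h. h + (h $ i0) *\<^sub>R w)) = 1 + w $ i0"
proof -
  let ?A = "matrix (\<lambda>h. h + (h $ i0) *\<^sub>R w)"
  have A: "?A $ i $ j = (if i = j then 1 else 0) + (if j = i0 then w $ i else 0)" for i j
    by (simp add: matrix_def axis_def)
  have "det ?A = prod (\<lambda>i. ?A$i$i) UNIV"
  proof (rule det_lowerdiagonal)
    fix i j :: 'n assume "i < j"
    then have "j \<noteq> i0" "i \<noteq> j" using le[of i] by auto
    then show "?A $ i $ j = 0" by (simp add: A)
  qed
  also have "\<dots> = prod (\<lambda>i. if i = i0 then 1 + w $ i0 else 1) UNIV"
    by (rule prod.cong) (auto simp: A)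
  also have "\<dots> = 1 + w $ i0"
    by (simp add: prod.If_cases)
  finally show ?thesis .
qed

lemma det_rank1:
  fixes e w :: "real^'n::{finite,wellorder}"
  assumes e1: "norm e = 1"
  shows "det (matrix (\<lambda>h. h + (e \<bullet> h) *\<^sub>R w)) = 1 + e \<bullet> w"
proof -
  define i0 where "i0 = (LEAST i. e $ i = e $ i)"
  define a0 where "a0 = axis i0 (1::real)"
  have na0: "norm a0 = norm e" using e1 by (simp add: a0_def)
  obtain U where U: "orthogonal_transformation U" "U a0 = e"
    using orthogonal_transformation_exists[OF na0] by blast
  define V where "V = inv U"
  have V: "orthogonal_transformation V" unfolding V_def using U(1) by (rule orthogonal_transformation_inv)
  have UV: "U (V y) = y" for y unfolding V_def
    using orthogonal_transformation_bij[OF U(1)] by (simp add: bij_def surj_f_inv_f)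
  have Uin: "U y \<bullet> U z = y \<bullet> z" for y z using U(1) by (simp add: orthogonal_transformation_def)
  have lU: "linear U" using U(1) by (rule orthogonal_transformation_linear)
  have lV: "linear V" using V by (rule orthogonal_transformation_linear)
  have Vi0: "(V h) $ i0 = e \<bullet> h" for h
  proof -
    have "(V h) $ i0 = a0 \<bullet> V h" by (simp add: a0_def inner_axis')
    also have "\<dots> = e \<bullet> h" using Uin[of a0 "V h"] by (simp add: U(2) UV)
    finally show ?thesis .
  qed
  have comp: "(\<lambda>h. h + (e \<bullet> h) *\<^sub>R w) = U \<circ> ((\<lambda>h. h + (h $ i0) *\<^sub>R V w) \<circ> V)"
  proof
    fix h
    have "U (V h + (V h $ i0) *\<^sub>R V w) = U (V h) + (V h $ i0) *\<^sub>R U (V w)"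
      using lU by (simp add: linear_add linear_scale)
    then show "h + (e \<bullet> h) *\<^sub>R w = (U \<circ> ((\<lambda>h. h + (h $ i0) *\<^sub>R V w) \<circ> V)) h"
      by (simp add: Vi0 UV)
  qed
  have lN: "linear (\<lambda>h. h + (h $ i0) *\<^sub>R V w)"
    by (auto simp: linear_iff algebra_simps)
  have le0: "i0 \<le> i" for i unfolding i0_def by (simp add: Least_le)
  have UVid: "det (matrix U) * det (matrix V) = 1"
  proof -
    have "U \<circ> V = id" using UV by auto
    have "det (matrix U) * det (matrix V) = det (matrix U ** matrix V)" by (simp add: det_mul)
    also have "matrix U ** matrix V = matrix (U \<circ> V)" by (simp add: matrix_compose lU lV)
    also have "\<dots> = mat 1" using \<open>U \<circ> V = id\<close> by (simp add: matrix_id_mat_1)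
    finally show ?thesis by simp
  qed
  have sh: "det (matrix (\<lambda>h. h + (h $ i0) *\<^sub>R V w)) = 1 + e \<bullet> w"
    using det_shear_axis[of i0 "V w", OF le0] Vi0 by simp
  have "matrix (\<lambda>h. h + (e \<bullet> h) *\<^sub>R w) = matrix U ** (matrix (\<lambda>h. h + (h $ i0) *\<^sub>R V w) ** matrix V)"
    unfolding comp by (simp add: matrix_compose lU lV lN linear_compose)
  then have "det (matrix (\<lambda>h. h + (e \<bullet> h) *\<^sub>R w)) = det (matrix U) * (det (matrix (\<lambda>h. h + (h $ i0) *\<^sub>R V w)) * det (matrix V))"
    by (simp add: det_mul)
  also have "\<dots> = (det (matrix U) * det (matrix V)) * (1 + e \<bullet> w)" unfolding sh by (simp add: algebra_simps)
  finally show ?thesis unfolding UVid by simp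
qed


lemma hasderiv_N:
  fixes z :: "'a::real_inner"
  assumes "z \<noteq> 0"
  shows "((\<lambda>z. (R / norm z) *\<^sub>R z) has_derivative (\<lambda>h. (R / norm z) *\<^sub>R (h - (sgn z \<bullet> h) *\<^sub>R sgn z))) (at z)"
  using assms
  apply (auto intro!: derivative_eq_intros has_derivative_norm)
  apply (rule ext)
  apply (simp add: sgn_div_norm scaleR_diff_right inner_commute field_simps)
  done

lemma hasderiv_normdiff:
  fixes y p :: "'a::real_inner"
  assumes "y \<noteq> p"
  shows "((\<lambda>x. norm (x - p)) has_derivative (\<lambda>h. h \<bullet> sgn (y - p))) (at y)"
proof -
  have d: "((\<lambda>x. x - p) has_derivative (\<lambda>h. h)) (at y)" by (auto intro!: derivative_eq_intros)
  have n: "(norm has_derivative (\<lambda>h. h \<bullet> sgn (y - p))) (at ((\<lambda>x. x - p) y))"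
    using has_derivative_norm[of "y - p"] assms by simp
  show ?thesis using has_derivative_compose[OF d n] by simp
qed

lemma hasderiv_invm:
  fixes y p :: "'a::real_inner"
  assumes "y \<noteq> p"
  shows "(invm p c has_derivative (\<lambda>h. (c / (norm (y - p))^2) *\<^sub>R (h - (2 * (sgn (y - p) \<bullet> h)) *\<^sub>R sgn (y - p)))) (at y)"
  using assms unfolding invm_def
  apply (auto intro!: derivative_eq_intros hasderiv_normdiff)
  apply (rule ext)
  apply (simp add: sgn_div_norm scaleR_diff_right inner_commute field_simps power2_eq_square power4_eq_xxxx)
  done

definition Qr :: "'a::real_inner \<Rightarrow> 'a \<Rightarrow> 'a" where
  "Qr v h = h - (2 * (v \<bullet> h)) *\<^sub>R v"

lemma Qr_lin: "Qr v (a + b) = Qr v a + Qr v b" "Qr v (t *\<^sub>R a) = t *\<^sub>R Qr v a" "Qr v (a - b) = Qr v a - Qr v b"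
  by (simp_all add: Qr_def inner_add_right inner_diff_right algebra_simps)

lemma Qr_sym: "x \<bullet> Qr v y = Qr v x \<bullet> y"
  by (simp add: Qr_def inner_diff_left inner_diff_right inner_commute)

lemma Qr_invol: "norm v = 1 \<Longrightarrow> Qr v (Qr v y) = y"
  by (simp add: Qr_def inner_diff_right algebra_simps dot_square_norm)

lemma Qr_inner: "norm v = 1 \<Longrightarrow> Qr v x \<bullet> Qr v y = x \<bullet> y"
  by (simp add: Qr_def inner_diff_right inner_diff_left algebra_simps dot_square_norm inner_commute)

lemma Qr_sgn: "Qr (sgn w) y = y - (2 * (w \<bullet> y) / (norm w)^2) *\<^sub>R w"
  by (simp add: Qr_def sgn_div_norm power2_eq_square divide_inverse inverse_mult_distrib mult_ac)

lemma key_identity: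
  fixes u p :: "'a::real_inner"
  assumes "norm u = R" "c = (norm p)^2 - R^2" "u \<noteq> p"
  shows "u \<bullet> Qr (sgn (u - p)) (invm p c u) = R^2"
proof -
  define d where "d = (norm (u - p))^2"
  have d0: "d > 0" using assms(3) by (simp add: d_def)
  have dd: "d = R^2 - 2 * (u \<bullet> p) + (norm p)^2" using assms(1) by (simp add: d_def norm_sq_expand)
  have nd: "norm (u - p) = sqrt d" by (simp add: d_def)
  have "u \<bullet> Qr (sgn (u - p)) (invm p c u) = 
     u \<bullet> invm p c u - 2 * (((u - p) \<bullet> invm p c u) * ((u - p) \<bullet> u)) / d"
    unfolding Qr_sgn d_def[symmetric] using d0
    by (simp add: inner_diff_right inner_add_right inner_commute field_simps)
  also have "\<dots> = R^2"
    unfolding invm_def d_def[symmetric] using d0 dd assms(1,2)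
    apply (simp add: inner_add_right inner_diff_right inner_diff_left inner_commute field_simps power2_eq_square dot_square_norm)
    by algebra
  finally show ?thesis .
qed

definition Psi :: "'a::real_inner \<Rightarrow> real \<Rightarrow> real \<Rightarrow> 'a \<Rightarrow> 'a" where
  "Psi p c R z = (norm z / R) *\<^sub>R invm p c ((R / norm z) *\<^sub>R z)"

definition PsiD :: "'a::real_inner \<Rightarrow> real \<Rightarrow> real \<Rightarrow> 'a \<Rightarrow> 'a \<Rightarrow> 'a" where
  "PsiD p c R z h = (let u = (R / norm z) *\<^sub>R z; lam = c / (norm (u - p))^2; v = sgn (u - p) in
     lam *\<^sub>R Qr v h + (sgn z \<bullet> h) *\<^sub>R ((1/R) *\<^sub>R invm p c u - lam *\<^sub>R Qr v (sgn z)))"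

lemma hasderiv_Psi:
  fixes z p :: "'a::real_inner"
  assumes z: "z \<noteq> 0" and R: "R > 0" and up: "(R / norm z) *\<^sub>R z \<noteq> p"
  shows "(Psi p c R has_derivative PsiD p c R z) (at z)"
proof -
  define u where "u = (R / norm z) *\<^sub>R z"
  define lam where "lam = c / (norm (u - p))^2"
  define v where "v = sgn (u - p)"
  have N: "((\<lambda>z. (R / norm z) *\<^sub>R z) has_derivative (\<lambda>h. (R / norm z) *\<^sub>R (h - (sgn z \<bullet> h) *\<^sub>R sgn z))) (at z)"
    by (rule hasderiv_N[OF z])
  have I: "(invm p c has_derivative (\<lambda>h. lam *\<^sub>R Qr v h)) (at ((\<lambda>z. (R / norm z) *\<^sub>R z) z))"
    using hasderiv_invm[of u p c] up unfolding u_def[symmetric] lam_def v_def Qr_def by simp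
  have C: "((\<lambda>z. invm p c ((R / norm z) *\<^sub>R z)) has_derivative
      (\<lambda>h. lam *\<^sub>R Qr v ((R / norm z) *\<^sub>R (h - (sgn z \<bullet> h) *\<^sub>R sgn z)))) (at z)"
    using has_derivative_compose[OF N I] .
  have nr: "((\<lambda>z. norm z / R) has_derivative (\<lambda>h. (h \<bullet> sgn z) / R)) (at z)"
    using has_derivative_norm[OF z] R by (auto intro!: derivative_eq_intros)
  have S: "(Psi p c R has_derivative (\<lambda>h. (norm z / R) *\<^sub>R (lam *\<^sub>R Qr v ((R / norm z) *\<^sub>R (h - (sgn z \<bullet> h) *\<^sub>R sgn z)))
        + ((h \<bullet> sgn z) / R) *\<^sub>R invm p c u)) (at z)"
    unfolding Psi_def u_def using has_derivative_scaleR[OF nr C] by simp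
  have eq: "(\<lambda>h. (norm z / R) *\<^sub>R (lam *\<^sub>R Qr v ((R / norm z) *\<^sub>R (h - (sgn z \<bullet> h) *\<^sub>R sgn z)))
        + ((h \<bullet> sgn z) / R) *\<^sub>R invm p c u) = PsiD p c R z"
  proof
    fix h
    have nz: "norm z > 0" using z by simp
    show "(norm z / R) *\<^sub>R (lam *\<^sub>R Qr v ((R / norm z) *\<^sub>R (h - (sgn z \<bullet> h) *\<^sub>R sgn z)))
        + ((h \<bullet> sgn z) / R) *\<^sub>R invm p c u = PsiD p c R z h"
      unfolding PsiD_def Let_def u_def[symmetric] lam_def[symmetric] v_def[symmetric] Qr_lin
      using nz R by (simp add: inner_commute algebra_simps)
  qed
  show ?thesis using S unfolding eq .
qed

lemma linear_Qr: "linear (Qr v)"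
  by (auto simp: linear_iff Qr_lin)

lemma orth_Qr: "norm v = 1 \<Longrightarrow> orthogonal_transformation (Qr v)"
  by (simp add: orthogonal_transformation_def linear_Qr Qr_inner)

lemma det_PsiD:
  fixes z p :: "real^'n::{finite,wellorder}"
  assumes z: "z \<noteq> 0" and R: "R > 0" and pR: "norm p > R" and c: "c = (norm p)^2 - R^2"
  shows "\<bar>det (matrix (PsiD p c R z))\<bar> = (c / (norm ((R / norm z) *\<^sub>R z - p))^2) ^ (CARD('n) - 1)"
proof -
  define u where "u = (R / norm z) *\<^sub>R z"
  define lam where "lam = c / (norm (u - p))^2"
  define v where "v = sgn (u - p)"
  define e where "e = sgn z"
  have nz: "norm z > 0" using z by simp
  have nu: "norm u = R" unfolding u_def using nz R by simp
  have up: "u \<noteq> p" using nu pR by auto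
  have c0: "c > 0" unfolding c using pR R by (simp add: power_strict_mono)
  have lam0: "lam > 0" unfolding lam_def using c0 up by simp
  have nv: "norm v = 1" unfolding v_def using up by (simp add: norm_sgn)
  have ne: "norm e = 1" unfolding e_def using z by (simp add: norm_sgn)
  have eu: "e = (1/R) *\<^sub>R u" unfolding e_def u_def sgn_div_norm using R by (simp add: divide_inverse)
  define a where "a = (1/R) *\<^sub>R invm p c u - lam *\<^sub>R Qr v e"
  define w where "w = (1/lam) *\<^sub>R Qr v a"
  have PD: "PsiD p c R z = (\<lambda>h. lam *\<^sub>R Qr v h + (e \<bullet> h) *\<^sub>R a)"
    unfolding PsiD_def Let_def u_def[symmetric] lam_def[symmetric] v_def[symmetric] e_def[symmetric] a_def ..
  have comp: "PsiD p c R z = (\<lambda>h. lam *\<^sub>R h) \<circ> (Qr v \<circ> (\<lambda>h. h + (e \<bullet> h) *\<^sub>R w))"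
  proof
    fix h
    show "PsiD p c R z h = ((\<lambda>h. lam *\<^sub>R h) \<circ> (Qr v \<circ> (\<lambda>h. h + (e \<bullet> h) *\<^sub>R w))) h"
      unfolding PD w_def using lam0 nv by (simp add: Qr_lin Qr_invol scaleR_add_right)
  qed
  have lsh: "linear (\<lambda>h. h + (e \<bullet> h) *\<^sub>R w)"
    by (auto simp: linear_iff algebra_simps inner_add_right)
  have ls: "linear (\<lambda>h. lam *\<^sub>R h)" by (auto simp: linear_iff algebra_simps)
  have "matrix (PsiD p c R z) = matrix (\<lambda>h. lam *\<^sub>R h) ** (matrix (Qr v) ** matrix (\<lambda>h. h + (e \<bullet> h) *\<^sub>R w))"
    unfolding comp by (simp add: matrix_compose lsh ls linear_Qr linear_compose)
  then have dd: "det (matrix (PsiD p c R z)) = lam ^ CARD('n) * (det (matrix (Qr v)) * (1 + e \<bullet> w))"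
    using det_matrix_scaleR[of lam] det_rank1[OF ne, of w]
    by (simp add: det_mul)
  have dq: "\<bar>det (matrix (Qr v))\<bar> = 1" using orth_Qr[OF nv] by simp
  have "e \<bullet> Qr v a = 1 - lam"
  proof -
    have "Qr v a = (1/R) *\<^sub>R Qr v (invm p c u) - lam *\<^sub>R e"
      unfolding a_def using nv by (simp add: Qr_lin Qr_invol)
    then have "e \<bullet> Qr v a = (1/R) * (e \<bullet> Qr v (invm p c u)) - lam * (e \<bullet> e)"
      by (simp add: inner_diff_right)
    also have "e \<bullet> Qr v (invm p c u) = (1/R) * R^2"
      unfolding eu using key_identity[OF nu c up] v_def by simp
    also have "e \<bullet> e = 1" using ne by (simp add: dot_square_norm)
    finally show ?thesis using R by (simp add: power2_eq_square)
  qed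
  then have ew: "1 + e \<bullet> w = 1 / lam" unfolding w_def using lam0 by (simp add: field_simps)
  have "\<bar>det (matrix (PsiD p c R z))\<bar> = lam ^ CARD('n) / lam"
    unfolding dd ew using dq lam0 by (simp add: abs_mult)
  also have "\<dots> = lam ^ (CARD('n) - 1)"
    using lam0 by (metis One_nat_def Suc_pred' card_gt_0_iff finite_class.finite_UNIV UNIV_not_empty
       nonzero_mult_div_cancel_left less_numeral_extra(3) power_Suc)
  finally show ?thesis unfolding lam_def u_def .
qed


definition Nm :: "real \<Rightarrow> 'a::real_normed_vector \<Rightarrow> 'a" where
  "Nm R z = (R / norm z) *\<^sub>R z"

lemma norm_Nm: "z \<noteq> 0 \<Longrightarrow> R > 0 \<Longrightarrow> norm (Nm R z) = R"
  by (simp add: Nm_def)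

locale invdata =
  fixes p :: "'a::real_inner" and c R :: real
  assumes R0: "R > 0" and pR: "norm p > R" and cdef: "c = (norm p)^2 - R^2"
begin

lemma c0: "c > 0" unfolding cdef using pR R0 by (simp add: power_strict_mono)

lemma sph_ne_p: "norm u = R \<Longrightarrow> u \<noteq> p" using pR by auto

lemma invm_sph: "norm u = R \<Longrightarrow> norm (invm p c u) = R"
  using invm_norm[OF _ cdef sph_ne_p] by blast

lemma invm_invol': "norm u = R \<Longrightarrow> invm p c (invm p c u) = u"
  using invm_invol[OF sph_ne_p c0] by blast

lemma Psi_eq: "z \<noteq> 0 \<Longrightarrow> Psi p c R z = (norm z / R) *\<^sub>R invm p c (Nm R z)"
  by (simp add: Psi_def Nm_def)

lemma norm_Psi: "z \<noteq> 0 \<Longrightarrow> norm (Psi p c R z) = norm z"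
  using invm_sph[OF norm_Nm[OF _ R0]] R0 by (simp add: Psi_eq)

lemma Nm_Psi: "z \<noteq> 0 \<Longrightarrow> Nm R (Psi p c R z) = invm p c (Nm R z)"
proof -
  assume z: "z \<noteq> 0"
  have "Nm R (Psi p c R z) = (R / norm (Psi p c R z)) *\<^sub>R Psi p c R z" by (simp add: Nm_def)
  also have "\<dots> = (R / norm z) *\<^sub>R ((norm z / R) *\<^sub>R invm p c (Nm R z))"
    by (subst norm_Psi[OF z], subst Psi_eq[OF z], rule refl)
  also have "\<dots> = invm p c (Nm R z)" using z R0 by simp
  finally show ?thesis .
qed

lemma Psi_invol: "z \<noteq> 0 \<Longrightarrow> Psi p c R (Psi p c R z) = z"
proof -
  assume z: "z \<noteq> 0"
  have nz: "Psi p c R z \<noteq> 0" using norm_Psi[OF z] z by auto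
  have "Psi p c R (Psi p c R z) = (norm z / R) *\<^sub>R invm p c (invm p c (Nm R z))"
    using Psi_eq[OF nz] norm_Psi[OF z] Nm_Psi[OF z] by simp
  also have "\<dots> = (norm z / R) *\<^sub>R Nm R z" using invm_invol'[OF norm_Nm[OF z R0]] by simp
  also have "\<dots> = z" using z R0 by (simp add: Nm_def)
  finally show ?thesis .
qed

lemma Psi_image: "Psi p c R ` (cball 0 R - {0}) = cball 0 R - {0}"
proof
  show "Psi p c R ` (cball 0 R - {0}) \<subseteq> cball 0 R - {0}"
    using norm_Psi by fastforce
  show "cball 0 R - {0} \<subseteq> Psi p c R ` (cball 0 R - {0})"
  proof
    fix z :: 'a assume z: "z \<in> cball 0 R - {0}"
    then have "z = Psi p c R (Psi p c R z)" using Psi_invol by auto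
    moreover have "Psi p c R z \<in> cball 0 R - {0}" using z norm_Psi[of z] by auto
    ultimately show "z \<in> Psi p c R ` (cball 0 R - {0})" by blast
  qed
qed

lemma Psi_inj: "inj_on (Psi p c R) (cball 0 R - {0})"
  by (rule inj_on_inverseI[where g="Psi p c R"]) (auto simp: Psi_invol)

lemma Wf_invm': "norm u = R \<Longrightarrow> Wf p c (invm p c u) = 1 / Wf p c u"
  using Wf_invm[OF sph_ne_p c0] by blast

lemma Wf_pos: "norm u = R \<Longrightarrow> Wf p c u > 0"
  using c0 sph_ne_p unfolding Wf_def by auto

end


lemma setint_cont:
  fixes H :: "'a::euclidean_space \<Rightarrow> real"
  assumes cH: "continuous_on S H" and Sb: "S \<in> sets borel" and bS: "bounded S" and B: "\<And>x. x \<in> S \<Longrightarrow> \<bar>H x\<bar> \<le> B"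
  shows "set_integrable lebesgue S H"
    and "(LINT x:S|lebesgue. H x) = integral\<^sup>L lborel (\<lambda>x. indicator S x * H x)"
proof -
  have Sl: "S \<in> sets lebesgue" using Sb by auto
  have Slm: "S \<in> lmeasurable" by (rule bounded_set_imp_lmeasurable[OF bS Sl])
  show si: "set_integrable lebesgue S H"
    by (rule measurable_bounded_by_integrable_imp_absolutely_integrable[where g="\<lambda>_. B"])
       (use continuous_imp_measurable_on_sets_lebesgue[OF cH Sl] Sl integrable_on_const[OF Slm] B in auto)
  have m: "(\<lambda>x. indicator S x *\<^sub>R H x) \<in> borel_measurable lborel"
    using borel_measurable_continuous_on_indicator[OF Sb cH] by (simp add: measurable_lborel1)
  show "(LINT x:S|lebesgue. H x) = integral\<^sup>L lborel (\<lambda>x. indicator S x * H x)"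
    unfolding set_lebesgue_integral_def using integral_completion[OF m] by simp
qed

lemma core_cov:
  fixes p :: "real^'n::{finite,wellorder}" and g :: "real^'n::{finite,wellorder} \<Rightarrow> real" and R c :: real
  defines "S \<equiv> cball 0 R - {0}" and "k \<equiv> CARD('n) - 1"
  assumes inv: "invdata p c R" and cg: "continuous_on (sphere 0 R) g"
  shows "integral\<^sup>L lborel (\<lambda>z. indicator S z * g (Nm R z)) =
         integral\<^sup>L lborel (\<lambda>z. indicator S z *
              (Wf p c (Nm R z) ^ k * g (invm p c (Nm R z))))"
proof -
  interpret invdata p c R by (rule inv)
  define F where "F = (\<lambda>z. g (Nm R z))"
  define H where "H = (\<lambda>z. Wf p c (Nm R z) ^ (k) * g (invm p c (Nm R z)))"
  define v :: "real^1" where "v = vec 1"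
  have v0: "v \<noteq> 0" by (simp add: v_def vec_eq_iff)
  have Sb: "S \<in> sets borel" unfolding S_def by auto
  have Sl: "S \<in> sets lebesgue" using Sb by auto
  have bS: "bounded S" unfolding S_def by auto
  have Nsph: "Nm R z \<in> sphere 0 R" if "z \<in> S" for z using that norm_Nm[of z R] R0 by (auto simp: S_def)
  have cN: "continuous_on S (Nm R)"
    unfolding Nm_def S_def by (intro continuous_intros) auto
  have cinv: "continuous_on (sphere 0 R) (invm p c)"
    unfolding invm_def by (intro continuous_intros) (use pR in auto)
  have cW: "continuous_on (sphere 0 R) (Wf p c)"
    unfolding Wf_def by (intro continuous_intros) (use pR in auto)
  have invsph: "invm p c ` sphere 0 R \<subseteq> sphere 0 R" using invm_sph by auto
  have cF: "continuous_on S F" unfolding F_def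
    using continuous_on_compose2[OF cg cN] Nsph by (auto simp: image_subset_iff)
  have cgi: "continuous_on (sphere 0 R) (\<lambda>u. g (invm p c u))"
    using continuous_on_compose2[OF cg cinv invsph] .
  have cH: "continuous_on S H" unfolding H_def
    by (intro continuous_intros continuous_on_compose2[OF cW cN] continuous_on_compose2[OF cgi cN]) (use Nsph in auto)
  obtain Bg where Bg: "\<And>u. u \<in> sphere 0 R \<Longrightarrow> \<bar>g u\<bar> \<le> Bg"
    using compact_imp_bounded[OF compact_continuous_image[OF cg compact_sphere]]
    unfolding bounded_iff by (auto simp: real_norm_def) (metis mem_sphere_0)
  have cWgi: "continuous_on (sphere 0 R) (\<lambda>u. Wf p c u ^ (k) * g (invm p c u))"
    by (intro continuous_intros cW cgi)
  obtain BH where BH: "\<And>u. u \<in> sphere 0 R \<Longrightarrow> \<bar>Wf p c u ^ (k) * g (invm p c u)\<bar> \<le> BH"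
    using compact_imp_bounded[OF compact_continuous_image[OF cWgi compact_sphere]]
    unfolding bounded_iff by (auto simp: real_norm_def) (metis mem_sphere_0)
  have siF: "set_integrable lebesgue S F" and eF: "(LINT x:S|lebesgue. F x) = integral\<^sup>L lborel (\<lambda>x. indicator S x * F x)"
    using setint_cont[OF cF Sb bS, of Bg] Bg Nsph unfolding F_def by auto
  have siH: "set_integrable lebesgue S H" and eH: "(LINT x:S|lebesgue. H x) = integral\<^sup>L lborel (\<lambda>x. indicator S x * H x)"
    using setint_cont[OF cH Sb bS, of BH] BH Nsph unfolding H_def by auto
  have der: "(Psi p c R has_derivative PsiD p c R x) (at x within S)" if "x \<in> S" for x
  proof -
    have x0: "x \<noteq> 0" using that by (simp add: S_def)
    have "(R / norm x) *\<^sub>R x \<noteq> p" using Nsph[OF that] sph_ne_p unfolding Nm_def by auto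
    then show ?thesis using hasderiv_Psi[OF x0 R0] has_derivative_at_withinI by blast
  qed
  have inj: "inj_on (Psi p c R) S" unfolding S_def by (rule Psi_inj)
  have img: "Psi p c R ` S = S" unfolding S_def by (rule Psi_image)
  note cov = has_absolute_integral_change_of_variables[OF Sl der inj, of "\<lambda>w. F w *\<^sub>R v" "integral S (\<lambda>w. F w *\<^sub>R v)"]
  have "(\<lambda>w. F w *\<^sub>R v) absolutely_integrable_on S" using siF v0 by auto
  then have L: "(\<lambda>x. \<bar>det (matrix (PsiD p c R x))\<bar> *\<^sub>R (F (Psi p c R x) *\<^sub>R v)) absolutely_integrable_on S \<and>
      integral S (\<lambda>x. \<bar>det (matrix (PsiD p c R x))\<bar> *\<^sub>R (F (Psi p c R x) *\<^sub>R v)) = integral S (\<lambda>w. F w *\<^sub>R v)"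
    using cov unfolding img by simp
  have pt: "\<bar>det (matrix (PsiD p c R x))\<bar> *\<^sub>R (F (Psi p c R x) *\<^sub>R v) = H x *\<^sub>R v" if "x \<in> S" for x
  proof -
    have x0: "x \<noteq> 0" using that by (simp add: S_def)
    have "\<bar>det (matrix (PsiD p c R x))\<bar> = Wf p c (Nm R x) ^ (k)"
      using det_PsiD[OF x0 R0 pR cdef] unfolding Wf_def Nm_def k_def .
    moreover have "F (Psi p c R x) = g (invm p c (Nm R x))" unfolding F_def using Nm_Psi[OF x0] by simp
    ultimately show ?thesis unfolding H_def by simp
  qed
  have "integral S (\<lambda>x. H x *\<^sub>R v) = integral S (\<lambda>w. F w *\<^sub>R v)"
    using L integral_cong[of S "\<lambda>x. \<bar>det (matrix (PsiD p c R x))\<bar> *\<^sub>R (F (Psi p c R x) *\<^sub>R v)" "\<lambda>x. H x *\<^sub>R v"] pt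
    by simp
  moreover have "integral S (\<lambda>x. H x *\<^sub>R v) = (LINT x:S|lebesgue. H x) *\<^sub>R v"
  proof -
    have "set_integrable lebesgue S (\<lambda>x. H x *\<^sub>R v)" using siH by auto
    then have "integral S (\<lambda>x. H x *\<^sub>R v) = (LINT x:S|lebesgue. H x *\<^sub>R v)"
      using set_lebesgue_integral_eq_integral(2) by metis
    also have "\<dots> = (LINT x:S|lebesgue. H x) *\<^sub>R v"
      using siH unfolding set_lebesgue_integral_def set_integrable_def by simp
    finally show ?thesis .
  qed
  moreover have "integral S (\<lambda>x. F x *\<^sub>R v) = (LINT x:S|lebesgue. F x) *\<^sub>R v"
  proof -
    have "set_integrable lebesgue S (\<lambda>x. F x *\<^sub>R v)" using siF by auto
    then have "integral S (\<lambda>x. F x *\<^sub>R v) = (LINT x:S|lebesgue. F x *\<^sub>R v)"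
      using set_lebesgue_integral_eq_integral(2) by metis
    also have "\<dots> = (LINT x:S|lebesgue. F x) *\<^sub>R v"
      using siF unfolding set_lebesgue_integral_def set_integrable_def by simp
    finally show ?thesis .
  qed
  ultimately have "(LINT x:S|lebesgue. H x) = (LINT x:S|lebesgue. F x)" using v0 by simp
  then show ?thesis using eF eH unfolding F_def H_def by simp
qed


typedef (overloaded) ('a::euclidean_space) bidx = "Basis :: 'a set"
  using nonempty_Basis by blast

definition bnum :: "'a::euclidean_space bidx \<Rightarrow> nat" where
  "bnum i = to_nat_on (Basis :: 'a set) (Rep_bidx i)"

lemma bnum_inj: "bnum i = bnum j \<Longrightarrow> i = j"
proof -
  assume "bnum i = bnum j"
  moreover have "inj_on (to_nat_on (Basis :: 'a set)) Basis" by (intro inj_on_to_nat_on countable_finite) simp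
  ultimately show "i = j" unfolding bnum_def using Rep_bidx Rep_bidx_inject by (metis inj_onD)
qed

instance bidx :: (euclidean_space) finite
proof
  have "finite (Rep_bidx ` (UNIV :: 'a bidx set))" by (rule finite_subset[of _ Basis]) (use Rep_bidx in auto)
  then show "finite (UNIV :: 'a bidx set)" by (rule finite_imageD) (simp add: inj_on_def Rep_bidx_inject)
qed

instantiation bidx :: (euclidean_space) linorder
begin
definition less_eq_bidx :: "'a bidx \<Rightarrow> 'a bidx \<Rightarrow> bool" where "less_eq_bidx i j \<longleftrightarrow> bnum i \<le> bnum j"
definition less_bidx :: "'a bidx \<Rightarrow> 'a bidx \<Rightarrow> bool" where "less_bidx i j \<longleftrightarrow> bnum i < bnum j"
instance by standard (auto simp: less_eq_bidx_def less_bidx_def intro: bnum_inj)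
end

instance bidx :: (euclidean_space) wellorder
proof
  fix P :: "'a bidx \<Rightarrow> bool" and a
  assume step: "\<And>x. (\<And>y. y < x \<Longrightarrow> P y) \<Longrightarrow> P x"
  have "\<And>x. bnum x = n \<Longrightarrow> P x" for n
    by (induct n rule: less_induct) (metis less_bidx_def step)
  then show "P a" by blast
qed

definition Tv :: "'a::euclidean_space \<Rightarrow> real^('a bidx)" where
  "Tv y = (\<chi> i. y \<bullet> Rep_bidx i)"

definition Ti :: "real^('a bidx) \<Rightarrow> 'a::euclidean_space" where
  "Ti v = (\<Sum>i\<in>UNIV. (v $ i) *\<^sub>R Rep_bidx i)"

lemma bij_Rep: "bij_betw Rep_bidx (UNIV :: 'a::euclidean_space bidx set) Basis"
  by (metis Rep_bidx_inverse Rep_bidx type_definition.Rep_range type_definition_bidx bij_betw_def inj_on_def)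

lemma sum_Basis_reindex: "(\<Sum>b\<in>(Basis::'a::euclidean_space set). f b) = (\<Sum>i\<in>UNIV. f (Rep_bidx i))"
  using sum.reindex_bij_betw[OF bij_Rep, of f] by simp

lemma prod_Basis_reindex: "(\<Prod>b\<in>(Basis::'a::euclidean_space set). f b) = (\<Prod>i\<in>UNIV. f (Rep_bidx i))"
  using prod.reindex_bij_betw[OF bij_Rep, of f] by simp

lemma Ti_inner: "Ti v \<bullet> Rep_bidx i = v $ i"
proof -
  have "Ti v \<bullet> Rep_bidx i = (\<Sum>j\<in>UNIV. v $ j * (Rep_bidx j \<bullet> Rep_bidx i))"
    by (simp add: Ti_def inner_sum_left)
  also have "\<dots> = (\<Sum>j\<in>UNIV. if j = i then v $ j else 0)"
    by (rule sum.cong) (auto simp: inner_Basis Rep_bidx Rep_bidx_inject)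
  finally show ?thesis by simp
qed

lemma Tv_Ti: "Tv (Ti v) = v" by (simp add: Tv_def Ti_inner vec_eq_iff)

lemma Ti_Tv: "Ti (Tv y) = y"
proof -
  have "Ti (Tv y) = (\<Sum>i\<in>UNIV. (y \<bullet> Rep_bidx i) *\<^sub>R Rep_bidx i)" by (simp add: Ti_def Tv_def)
  also have "\<dots> = (\<Sum>b\<in>Basis. (y \<bullet> b) *\<^sub>R b)" by (rule sum_Basis_reindex[symmetric])
  also have "\<dots> = y" by (rule euclidean_representation)
  finally show ?thesis .
qed

lemma Tv_inner: "Tv x \<bullet> Tv y = x \<bullet> y"
proof -
  have "Tv x \<bullet> Tv y = (\<Sum>i\<in>UNIV. (x \<bullet> Rep_bidx i) * (y \<bullet> Rep_bidx i))" by (simp add: Tv_def inner_vec_def)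
  also have "\<dots> = (\<Sum>b\<in>Basis. (x \<bullet> b) * (y \<bullet> b))" by (rule sum_Basis_reindex[symmetric])
  also have "\<dots> = x \<bullet> y" by (rule euclidean_inner[symmetric])
  finally show ?thesis .
qed

lemma Tv_norm: "norm (Tv x) = norm x" by (simp add: norm_eq_sqrt_inner Tv_inner)

lemma Tv_lin: "Tv (x + y) = Tv x + Tv y" "Tv (a *\<^sub>R x) = a *\<^sub>R Tv x" "Tv (x - y) = Tv x - Tv y" "Tv 0 = 0"
  by (simp_all add: Tv_def vec_eq_iff inner_add_left inner_diff_left)

lemma linear_Tv: "linear Tv" by (auto simp: linear_iff Tv_lin)

lemma card_bidx: "CARD('a::euclidean_space bidx) = DIM('a)"
  using bij_betw_same_card[OF bij_Rep] by simp


lemma Basis_vec_range: "(Basis :: (real^'n) set) = range (\<lambda>i. axis i 1)"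
  unfolding Basis_vec_def by auto

lemma prod_Basis_vec: "(\<Prod>b\<in>(Basis :: (real^'n) set). f b) = (\<Prod>i\<in>UNIV. f (axis i 1))"
  unfolding Basis_vec_range using prod.reindex[of "\<lambda>i. axis i (1::real)" UNIV f]
  by (simp add: inj_on_def axis_eq_axis o_def)

lemma ball_Basis_Rep: "(\<forall>b\<in>(Basis::'a::euclidean_space set). P b) \<longleftrightarrow> (\<forall>i. P (Rep_bidx i))"
  by (metis Rep_bidx Rep_bidx_cases)

lemma Tv_cont: "continuous_on UNIV Tv"
  by (rule linear_continuous_on) (simp add: linear_Tv linear_conv_bounded_linear[symmetric])

lemma Tv_meas: "Tv \<in> borel_measurable (lborel :: 'a::euclidean_space measure)"
  using borel_measurable_continuous_onI[OF Tv_cont] by (simp add: measurable_lborel1)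

lemma Tv_vimage_box: "Tv -` box l u = box (Ti l) (Ti u)"
proof -
  have "y \<in> box (Ti l) (Ti u) \<longleftrightarrow> (\<forall>i. l $ i < y \<bullet> Rep_bidx i \<and> y \<bullet> Rep_bidx i < u $ i)" for y
  proof -
    have "y \<in> box (Ti l) (Ti u) \<longleftrightarrow> (\<forall>b\<in>Basis. Ti l \<bullet> b < y \<bullet> b \<and> y \<bullet> b < Ti u \<bullet> b)" by (simp add: mem_box)
    also have "\<dots> \<longleftrightarrow> (\<forall>i. Ti l \<bullet> Rep_bidx i < y \<bullet> Rep_bidx i \<and> y \<bullet> Rep_bidx i < Ti u \<bullet> Rep_bidx i)"
      by (rule ball_Basis_Rep)
    finally show ?thesis by (simp add: Ti_inner)
  qed
  moreover have "Tv y \<in> box l u \<longleftrightarrow> (\<forall>i. l $ i < y \<bullet> Rep_bidx i \<and> y \<bullet> Rep_bidx i < u $ i)" for y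
    unfolding mem_box Basis_vec_range by (auto simp: Tv_def inner_axis)
  ultimately show ?thesis by auto
qed

lemma distr_Tv: "distr lborel borel (Tv :: 'a::euclidean_space \<Rightarrow> _) = lborel"
proof (rule lborel_eqI[symmetric])
  fix l u :: "real^('a bidx)"
  assume le: "\<And>b. b \<in> Basis \<Longrightarrow> l \<bullet> b \<le> u \<bullet> b"
  have le': "\<forall>b\<in>Basis. Ti l \<bullet> b \<le> Ti u \<bullet> b"
  proof
    fix b :: 'a assume "b \<in> Basis"
    then obtain i where "b = Rep_bidx i" using bij_Rep unfolding bij_betw_def by auto
    then show "Ti l \<bullet> b \<le> Ti u \<bullet> b" using le[of "axis i 1"] by (simp add: Ti_inner Basis_vec_range inner_axis)
  qed
  have "emeasure (distr lborel borel Tv) (box l u) = emeasure lborel (Tv -` box l u \<inter> space lborel)"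
    by (rule emeasure_distr[OF Tv_meas]) simp
  also have "\<dots> = emeasure lborel (box (Ti l) (Ti u) :: 'a set)" by (simp add: Tv_vimage_box)
  also have "\<dots> = (\<Prod>b\<in>Basis. (Ti u - Ti l) \<bullet> b)" using le' by (simp add: emeasure_lborel_box_eq)
  also have "\<dots> = (\<Prod>i\<in>UNIV. (u - l) $ i)"
    by (simp add: prod_Basis_reindex inner_diff_left Ti_inner)
  also have "\<dots> = (\<Prod>b\<in>Basis. (u - l) \<bullet> b)"
    by (simp add: prod_Basis_vec inner_axis)
  finally show "emeasure (distr lborel borel Tv) (box l u) = (\<Prod>b\<in>Basis. (u - l) \<bullet> b)" .
qed simp

lemma integral_Tv:
  fixes h :: "real^('a::euclidean_space bidx) \<Rightarrow> 'b::{banach, second_countable_topology}"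
  assumes "h \<in> borel_measurable borel"
  shows "integral\<^sup>L lborel (\<lambda>z::'a. h (Tv z)) = integral\<^sup>L lborel h"
proof -
  have "integral\<^sup>L (distr lborel borel (Tv :: 'a \<Rightarrow> _)) h = integral\<^sup>L lborel (\<lambda>z::'a. h (Tv z))"
    by (rule integral_distr[OF Tv_meas assms])
  then show ?thesis unfolding distr_Tv by simp
qed

lemma sphere_integral:
  fixes g :: "'a::euclidean_space \<Rightarrow> 'b::{banach, second_countable_topology}"
  assumes R: "R > 0" and cg: "continuous_on (sphere 0 R) g"
  shows "integral\<^sup>L (sphere_measure R) g =
    (real DIM('a) / R) *\<^sub>R integral\<^sup>L lborel (\<lambda>z. indicator (cball 0 R - {0}) z *\<^sub>R g (Nm R z))"
proof -
  define S :: "'a set" where "S = cball 0 R - {0}"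
  define M where "M = distr (restrict_space lborel S) (restrict_space borel (sphere 0 R)) (Nm R :: 'a \<Rightarrow> 'a)"
  define r where "r = real DIM('a) / R"
  have r0: "r \<ge> 0" using R by (simp add: r_def)
  have NmL: "Nm R = (\<lambda>z::'a. (R / norm z) *\<^sub>R z)" by (simp add: Nm_def[abs_def])
  have sm: "sphere_measure R = density M (\<lambda>_. ennreal r)"
    unfolding sphere_measure_def M_def r_def[symmetric] S_def[symmetric] NmL[symmetric]
    by (rule measure_eqI) (auto simp: emeasure_density_const)
  have cN: "continuous_on S (Nm R)" unfolding Nm_def S_def by (intro continuous_intros) auto
  have Nmeas: "Nm R \<in> measurable (restrict_space lborel S) (restrict_space borel (sphere 0 R))"
  proof (rule measurable_restrict_space2)
    show "Nm R \<in> space (restrict_space lborel S) \<rightarrow> sphere 0 R"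
      using R by (auto simp: S_def space_restrict_space norm_Nm)
    have "Nm R \<in> borel_measurable (restrict_space borel S)" by (rule borel_measurable_continuous_on_restrict[OF cN])
    then show "Nm R \<in> borel_measurable (restrict_space lborel S)"
      by (subst measurable_cong_sets[OF sets_restrict_space_cong[OF sets_lborel] refl]) 
  qed
  have gm: "g \<in> borel_measurable (restrict_space borel (sphere 0 R))"
    by (rule borel_measurable_continuous_on_restrict[OF cg])
  have gM: "g \<in> borel_measurable M" unfolding M_def using gm by simp
  have "integral\<^sup>L (sphere_measure R) g = integral\<^sup>L M (\<lambda>x. r *\<^sub>R g x)"
    unfolding sm by (rule integral_density[OF gM]) (use r0 in auto)
  also have "\<dots> = r *\<^sub>R integral\<^sup>L M g" by simp
  also have "integral\<^sup>L M g = integral\<^sup>L (restrict_space lborel S) (\<lambda>z. g (Nm R z))"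
    unfolding M_def by (rule integral_distr[OF Nmeas gm])
  also have "\<dots> = integral\<^sup>L lborel (\<lambda>z. indicator S z *\<^sub>R g (Nm R z))"
    by (rule integral_restrict_space) (simp add: S_def)
  finally show ?thesis unfolding r_def S_def .
qed


lemma Ti_lin: "Ti (x + y) = Ti x + Ti y" "Ti (a *\<^sub>R x) = a *\<^sub>R Ti x" "Ti (x - y) = Ti x - Ti y"
  by (simp_all add: Ti_def sum.distrib scaleR_add_left scaleR_diff_left sum_subtractf scaleR_sum_right)

lemma Ti_norm: "norm (Ti v) = norm v"
  by (metis Tv_Ti Tv_norm)

lemma Ti_zero_iff: "Ti v = 0 \<longleftrightarrow> v = 0"
  by (metis Ti_norm norm_eq_zero)

lemma Tv_zero_iff: "Tv z = 0 \<longleftrightarrow> z = 0"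
  by (metis Tv_norm norm_eq_zero)

lemma Nm_Tv: "Nm R (Tv z) = Tv (Nm R z)" by (simp add: Nm_def Tv_norm Tv_lin)
lemma Nm_Ti: "Nm R (Ti z) = Ti (Nm R z)" by (simp add: Nm_def Ti_norm Ti_lin)

lemma Wf_T: "Wf (Tv p) c v = Wf p c (Ti v)"
  unfolding Wf_def by (metis Ti_lin(3) Ti_norm Ti_Tv)

lemma invm_T: "Ti (invm (Tv p) c v) = invm p c (Ti v)"
  unfolding invm_def by (simp add: Ti_lin Ti_Tv) (metis Ti_lin(3) Ti_norm Ti_Tv)

lemma Ti_cont: "continuous_on UNIV Ti"
  unfolding Ti_def by (intro continuous_intros)

lemma invdata_Tv: "invdata p c R \<Longrightarrow> invdata (Tv p) c R"
  unfolding invdata_def by (simp add: Tv_norm)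

lemma core_a:
  fixes p :: "'a::euclidean_space" and g :: "'a \<Rightarrow> real"
  assumes inv: "invdata p c R" and cg: "continuous_on (sphere 0 R) g"
  shows "integral\<^sup>L (sphere_measure R) g =
         integral\<^sup>L (sphere_measure R) (\<lambda>u. Wf p c u ^ (DIM('a) - 1) * g (invm p c u))"
proof -
  interpret invdata p c R by (rule inv)
  interpret T: invdata "Tv p" c R by (rule invdata_Tv[OF inv])
  define k where "k = DIM('a) - 1"
  define g' where "g' = (\<lambda>v. g (Ti v))"
  have Tisph: "Ti ` sphere 0 R \<subseteq> sphere 0 R" by (auto simp: Ti_norm)
  have cg': "continuous_on (sphere 0 R) g'" unfolding g'_def
    by (rule continuous_on_compose2[OF cg continuous_on_subset[OF Ti_cont]]) (use Tisph in auto)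
  have cinv: "continuous_on (sphere 0 R) (invm p c)"
    unfolding invm_def by (intro continuous_intros) (use pR in auto)
  have cW: "continuous_on (sphere 0 R) (Wf p c)"
    unfolding Wf_def by (intro continuous_intros) (use pR in auto)
  have invsph: "invm p c ` sphere 0 R \<subseteq> sphere 0 R" using invm_sph by auto
  have cH: "continuous_on (sphere 0 R) (\<lambda>u. Wf p c u ^ k * g (invm p c u))"
    by (intro continuous_intros cW continuous_on_compose2[OF cg cinv invsph])
  define Sn :: "(real^('a bidx)) set" where "Sn = cball 0 R - {0}"
  define Sa :: "'a set" where "Sa = cball 0 R - {0}"
  have memS: "Tv z \<in> Sn \<longleftrightarrow> z \<in> Sa" for z by (simp add: Sn_def Sa_def Tv_norm Tv_zero_iff)
  have Nsph: "Nm R w \<in> sphere 0 R" if "w \<in> Sn" for w using that norm_Nm[of w R] R0 by (auto simp: Sn_def)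
  have cN: "continuous_on Sn (Nm R)" unfolding Nm_def Sn_def by (intro continuous_intros) auto
  define h1 where "h1 = (\<lambda>w. indicator Sn w * g' (Nm R w))"
  define h2 where "h2 = (\<lambda>w. indicator Sn w * (Wf (Tv p) c (Nm R w) ^ k * g' (invm (Tv p) c (Nm R w))))"
  have Snb: "Sn \<in> sets borel" unfolding Sn_def by auto
  have m1: "h1 \<in> borel_measurable borel"
  proof -
    have "continuous_on Sn (\<lambda>w. g' (Nm R w))"
      using continuous_on_compose2[OF cg' cN] Nsph by (auto simp: image_subset_iff)
    from borel_measurable_continuous_on_indicator[OF Snb this] show ?thesis unfolding h1_def by simp
  qed
  have m2: "h2 \<in> borel_measurable borel"
  proof -
    have cinv': "continuous_on (sphere 0 R) (invm (Tv p) c)"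
      unfolding invm_def by (intro continuous_intros) (use T.pR in auto)
    have cW': "continuous_on (sphere 0 R) (Wf (Tv p) c)"
      unfolding Wf_def by (intro continuous_intros) (use T.pR in auto)
    have invsph': "invm (Tv p) c ` sphere 0 R \<subseteq> sphere 0 R" using T.invm_sph by auto
    have "continuous_on (sphere 0 R) (\<lambda>u. Wf (Tv p) c u ^ k * g' (invm (Tv p) c u))"
      by (intro continuous_intros cW' continuous_on_compose2[OF cg' cinv' invsph'])
    then have "continuous_on Sn (\<lambda>w. Wf (Tv p) c (Nm R w) ^ k * g' (invm (Tv p) c (Nm R w)))"
      using continuous_on_compose2[OF _ cN, of "sphere 0 R" "\<lambda>u. Wf (Tv p) c u ^ k * g' (invm (Tv p) c u)"] Nsph
      by (auto simp: image_subset_iff)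
    from borel_measurable_continuous_on_indicator[OF Snb this] show ?thesis unfolding h2_def by simp
  qed
  have "integral\<^sup>L lborel (\<lambda>z. indicator Sa z *\<^sub>R g (Nm R z)) = integral\<^sup>L lborel (\<lambda>z::'a. h1 (Tv z))"
    by (rule Bochner_Integration.integral_cong) (auto simp: h1_def g'_def memS Nm_Tv Ti_Tv indicator_def)
  also have "\<dots> = integral\<^sup>L lborel h1" by (rule integral_Tv[OF m1])
  also have "\<dots> = integral\<^sup>L lborel h2"
    unfolding h1_def h2_def Sn_def k_def using core_cov[OF T.invdata_axioms cg'] by (simp add: card_bidx)
  also have "\<dots> = integral\<^sup>L lborel (\<lambda>z::'a. h2 (Tv z))" by (rule integral_Tv[OF m2, symmetric])
  also have "\<dots> = integral\<^sup>L lborel (\<lambda>z. indicator Sa z *\<^sub>R (Wf p c (Nm R z) ^ k * g (invm p c (Nm R z))))"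
    by (rule Bochner_Integration.integral_cong) (auto simp: h2_def g'_def memS Nm_Tv Ti_Tv Wf_T invm_T indicator_def)
  finally have eq: "integral\<^sup>L lborel (\<lambda>z. indicator Sa z *\<^sub>R g (Nm R z)) =
      integral\<^sup>L lborel (\<lambda>z. indicator Sa z *\<^sub>R (Wf p c (Nm R z) ^ k * g (invm p c (Nm R z))))" .
  show ?thesis
    unfolding sphere_integral[OF R0 cg] sphere_integral[OF R0 cH[unfolded k_def]]
    using eq unfolding Sa_def k_def by simp
qed


lemma space_sm: "space (sphere_measure R :: 'a::euclidean_space measure) = sphere 0 R"
  by (simp add: sphere_measure_def space_scale_measure space_restrict_space)

lemma sets_sm: "sets (sphere_measure R :: 'a::euclidean_space measure) = sets (restrict_space borel (sphere 0 R))"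
  by (simp add: sphere_measure_def)

lemma finite_sm:
  assumes R: "R > 0"
  shows "finite_measure (sphere_measure R :: 'a::euclidean_space measure)"
proof (rule finite_measureI)
  define S :: "'a set" where "S = cball 0 R - {0}"
  have Nmeas: "(\<lambda>z::'a. (R / norm z) *\<^sub>R z) \<in> measurable (restrict_space lborel S) (restrict_space borel (sphere 0 R))"
  proof (rule measurable_restrict_space2)
    show "(\<lambda>z::'a. (R / norm z) *\<^sub>R z) \<in> space (restrict_space lborel S) \<rightarrow> sphere 0 R"
      using R by (auto simp: S_def space_restrict_space)
    have cN: "continuous_on S (\<lambda>z::'a. (R / norm z) *\<^sub>R z)" unfolding S_def by (intro continuous_intros) auto
    have "(\<lambda>z::'a. (R / norm z) *\<^sub>R z) \<in> borel_measurable (restrict_space borel S)" by (rule borel_measurable_continuous_on_restrict[OF cN])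
    then show "(\<lambda>z::'a. (R / norm z) *\<^sub>R z) \<in> borel_measurable (restrict_space lborel S)"
      by (subst measurable_cong_sets[OF sets_restrict_space_cong[OF sets_lborel] refl]) 
  qed
  have "emeasure (sphere_measure R :: 'a measure) (space (sphere_measure R)) =
     ennreal (real DIM('a) / R) * emeasure (restrict_space lborel S) ((\<lambda>z::'a. (R / norm z) *\<^sub>R z) -` sphere 0 R \<inter> space (restrict_space lborel S))"
  proof -
    have sp: "sphere 0 R \<in> sets (restrict_space borel (sphere (0::'a) R))"
      by (subst sets_restrict_space_iff) auto
    have "emeasure (distr (restrict_space lborel S) (restrict_space borel (sphere 0 R)) (\<lambda>z::'a. (R / norm z) *\<^sub>R z)) (sphere 0 R)
       = emeasure (restrict_space lborel S) ((\<lambda>z::'a. (R / norm z) *\<^sub>R z) -` sphere 0 R \<inter> space (restrict_space lborel S))"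
      by (rule emeasure_distr[OF Nmeas sp])
    then show ?thesis
      unfolding sphere_measure_def S_def[symmetric] by (simp add: space_scale_measure space_restrict_space)
  qed
  also have "(\<lambda>z::'a. (R / norm z) *\<^sub>R z) -` sphere 0 R \<inter> space (restrict_space lborel S) = S"
    using R by (auto simp: S_def space_restrict_space)
  also have "emeasure (restrict_space lborel S) S = emeasure lborel S"
    by (simp add: emeasure_restrict_space S_def)
  finally have E: "emeasure (sphere_measure R :: 'a measure) (space (sphere_measure R)) = ennreal (real DIM('a) / R) * emeasure lborel S" .
  have "emeasure lborel S < \<infinity>"
    by (rule le_less_trans[OF emeasure_mono[of S "cball 0 R"] emeasure_lborel_cball_finite]) (auto simp: S_def)
  then show "emeasure (sphere_measure R :: 'a measure) (space (sphere_measure R)) \<noteq> \<infinity>"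
    unfolding E by (simp add: ennreal_mult_eq_top_iff)
qed

lemma integrable_sm:
  fixes f :: "'a::euclidean_space \<Rightarrow> 'b::{banach, second_countable_topology}"
  assumes R: "R > 0" and cf: "continuous_on (sphere 0 R) f"
  shows "integrable (sphere_measure R) f"
proof -
  interpret finite_measure "sphere_measure R :: 'a measure" by (rule finite_sm[OF R])
  obtain B where B: "\<And>u. u \<in> sphere 0 R \<Longrightarrow> norm (f u) \<le> B"
    using compact_imp_bounded[OF compact_continuous_image[OF cf compact_sphere]]
    unfolding bounded_iff by (auto) (metis mem_sphere_0)
  show ?thesis
  proof (rule integrable_const_bound[where B=B])
    show "AE x in sphere_measure R. norm (f x) \<le> B" using B by (intro AE_I2) (simp add: space_sm)
    show "f \<in> borel_measurable (sphere_measure R)"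
      using borel_measurable_continuous_on_restrict[OF cf] by (simp add: measurable_cong_sets[OF sets_sm refl])
  qed
qed

lemma omega_pos: "norm y = R \<Longrightarrow> norm x \<noteq> R \<Longrightarrow> omega x y > 0"
proof -
  assume a: "norm y = R" "norm x \<noteq> R"
  then have "x \<noteq> y" by auto
  moreover have "(norm x)^2 \<noteq> (norm y)^2" using a by (metis norm_ge_zero power2_eq_imp_eq)
  ultimately show ?thesis unfolding omega_def by simp
qed

lemma omega_cont:
  fixes x :: "'a::real_inner"
  assumes "norm x \<noteq> R"
  shows "continuous_on (sphere 0 R) (omega x)"
  unfolding omega_def[abs_def] by (intro continuous_intros) (use assms in auto)

lemma exists_inv:
  fixes x :: "'a::real_inner"
  assumes R: "R > 0" and xR: "norm x \<noteq> R" and x0: "x \<noteq> 0"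
  shows "\<exists>p c. invdata p c R \<and> (\<forall>u. norm u = R \<longrightarrow> omega x u = Wf p c u)"
proof (cases "norm x > R")
  case True
  then show ?thesis using omega_out[OF _ True R] R by (intro exI[of _ x] exI[of _ "(norm x)^2 - R^2"]) (auto simp: invdata_def)
next
  case False
  then have xl: "norm x < R" using xR by simp
  define p where "p = (R^2 / (norm x)^2) *\<^sub>R x"
  have nx: "norm x > 0" using x0 by simp
  have np: "norm p = R^2 / norm x" unfolding p_def using nx by (simp add: power2_eq_square)
  have "R < R^2 / norm x" using xl nx R by (simp add: field_simps power2_eq_square)
  then have "invdata p ((norm p)^2 - R^2) R" unfolding invdata_def np using R by simp
  then show ?thesis using omega_in[OF _ xl x0 R] unfolding p_def[symmetric] by blast
qed


lemma pt_alg: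
  fixes w s :: real and h :: "real \<Rightarrow> real"
  assumes w: "w > 0" and s: "s = real k / 2"
  shows "w ^ k * ((1/w) powr s * h (ln (1/w))) = w powr s * h (- ln w)"
proof -
  have "w ^ k = w powr (real k)" using w by (simp add: powr_realpow)
  moreover have "(1/w) powr s = 1 / w powr s" using w by (simp add: powr_divide)
  moreover have "ln (1/w) = - ln w" using w by (simp add: ln_div)
  moreover have "w powr (real k) / w powr s = w powr s"
  proof -
    have "real k - s = s" using s by simp
    then show ?thesis using w by (simp add: powr_diff[symmetric])
  qed
  ultimately show ?thesis by (metis (no_types, lifting) times_divide_eq_left times_divide_eq_right mult.commute mult_1)
qed

lemma omega_zero: "norm y = R \<Longrightarrow> R > 0 \<Longrightarrow> omega 0 y = 1"
  unfolding omega_def by simp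

lemma cont_comp_omega:
  fixes x :: "'a::euclidean_space" and h :: "real \<Rightarrow> real"
  assumes xR: "norm x \<noteq> R" and ch: "continuous_on UNIV h"
  shows "continuous_on (sphere 0 R) (\<lambda>y. omega x y powr s * h (ln (omega x y)))"
proof -
  have co: "continuous_on (sphere 0 R) (omega x)" by (rule omega_cont[OF xR])
  have pos: "\<And>y. y \<in> sphere 0 R \<Longrightarrow> omega x y > 0" using omega_pos xR by auto
  have cl: "continuous_on (sphere 0 R) (\<lambda>y. ln (omega x y))"
    by (intro continuous_on_ln co) (use pos in force)
  show ?thesis
    by (intro continuous_intros co continuous_on_compose2[OF ch cl]) (use pos in force)+
qed

lemma sym_sm:
  fixes x :: "'a::euclidean_space" and h :: "real \<Rightarrow> real"
  assumes R: "R > 0" and xR: "norm x \<noteq> R" and ch: "continuous_on UNIV h"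
  defines "s \<equiv> real (DIM('a) - 1) / 2"
  shows "integral\<^sup>L (sphere_measure R) (\<lambda>y. omega x y powr s * h (ln (omega x y))) =
         integral\<^sup>L (sphere_measure R) (\<lambda>y. omega x y powr s * h (- ln (omega x y)))"
proof (cases "x = 0")
  case True
  show ?thesis
    by (rule Bochner_Integration.integral_cong) (use True R in \<open>auto simp: space_sm omega_zero\<close>)
next
  case False
  obtain p c where inv: "invdata p c R" and om: "\<And>u. norm u = R \<Longrightarrow> omega x u = Wf p c u"
    using exists_inv[OF R xR False] by blast
  interpret invdata p c R by (rule inv)
  have cg: "continuous_on (sphere 0 R) (\<lambda>y. omega x y powr s * h (ln (omega x y)))"
    by (rule cont_comp_omega[OF xR ch])
  have "integral\<^sup>L (sphere_measure R) (\<lambda>y. omega x y powr s * h (ln (omega x y))) =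
      integral\<^sup>L (sphere_measure R) (\<lambda>u. Wf p c u ^ (DIM('a) - 1) * (omega x (invm p c u) powr s * h (ln (omega x (invm p c u)))))"
    by (rule core_a[OF inv cg])
  also have "\<dots> = integral\<^sup>L (sphere_measure R) (\<lambda>y. omega x y powr s * h (- ln (omega x y)))"
  proof (rule Bochner_Integration.integral_cong)
    fix u assume "u \<in> space (sphere_measure R :: 'a measure)"
    then have u: "norm u = R" by (simp add: space_sm)
    have w: "Wf p c u > 0" using Wf_pos[OF u] .
    have "omega x (invm p c u) = 1 / Wf p c u"
      using om[OF invm_sph[OF u]] Wf_invm'[OF u] by simp
    then show "Wf p c u ^ (DIM('a) - 1) * (omega x (invm p c u) powr s * h (ln (omega x (invm p c u)))) =
          omega x u powr s * h (- ln (omega x u))"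
      using pt_alg[OF w, of s "DIM('a) - 1" h] om[OF u] unfolding s_def by simp
  qed simp
  finally show ?thesis .
qed

lemma odd_sm:
  fixes x :: "'a::euclidean_space" and h :: "real \<Rightarrow> real"
  assumes R: "R > 0" and xR: "norm x \<noteq> R" and ch: "continuous_on UNIV h" and odd: "\<And>t. h (- t) = - h t"
  defines "s \<equiv> real (DIM('a) - 1) / 2"
  shows "integral\<^sup>L (sphere_measure R) (\<lambda>y. omega x y powr s * h (ln (omega x y))) = 0"
proof -
  have "integral\<^sup>L (sphere_measure R) (\<lambda>y. omega x y powr s * h (ln (omega x y))) =
        integral\<^sup>L (sphere_measure R) (\<lambda>y. - (omega x y powr s * h (ln (omega x y))))"
    using sym_sm[OF R xR ch] unfolding s_def odd by simp
  then show ?thesis by simp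
qed


lemma cpow_split:
  assumes w: "w > 0"
  shows "cpow_pos w (complex_of_real s + \<i> * complex_of_real b) =
    complex_of_real (w powr s * cos (b * ln w)) + \<i> * complex_of_real (w powr s * sin (b * ln w))"
proof -
  have "cpow_pos w (complex_of_real s + \<i> * complex_of_real b) =
      exp (complex_of_real (s * ln w)) * exp (\<i> * complex_of_real (b * ln w))"
    unfolding cpow_pos_def by (simp add: distrib_right exp_add[symmetric] mult.assoc)
  also have "\<dots> = complex_of_real (w powr s) * cis (b * ln w)"
    using w by (simp add: exp_of_real[symmetric] cis_conv_exp powr_def)
  finally show ?thesis by (simp add: complex_eq_iff)
qed

lemma cpow_series:
  assumes w: "w > 0"
  shows "(\<lambda>j. (\<alpha> - complex_of_real s) ^ j / of_nat (fact j) * complex_of_real (w powr s * (ln w) ^ j))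
           sums cpow_pos w \<alpha>"
proof -
  define X where "X = (\<alpha> - complex_of_real s) * complex_of_real (ln w)"
  have "(\<lambda>n. complex_of_real (w powr s) * (X ^ n /\<^sub>R fact n)) sums (complex_of_real (w powr s) * exp X)"
    by (rule sums_mult[OF exp_converges])
  moreover have "(\<lambda>n. complex_of_real (w powr s) * (X ^ n /\<^sub>R fact n)) =
      (\<lambda>j. (\<alpha> - complex_of_real s) ^ j / of_nat (fact j) * complex_of_real (w powr s * (ln w) ^ j))"
    by (rule ext) (simp add: X_def power_mult_distrib scaleR_conv_of_real divide_inverse mult_ac)
  moreover have "complex_of_real (w powr s) * exp X = cpow_pos w \<alpha>"
  proof -
    have "complex_of_real (w powr s) = exp (complex_of_real s * complex_of_real (ln w))"
      using w by (simp add: powr_def exp_of_real[symmetric])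
    then show ?thesis unfolding cpow_pos_def X_def by (simp add: exp_add[symmetric] algebra_simps)
  qed
  ultimately show ?thesis by simp
qed

theorem corollary2:
  fixes x :: "'a::euclidean_space" and R :: real and k :: nat
    and F :: "complex \<Rightarrow> complex"
  defines "k \<equiv> DIM('a) - 1"
  defines "F \<equiv> (\<lambda>\<alpha>. integral\<^sup>L (sphere_measure R) (\<lambda>y. cpow_pos (omega x y) \<alpha>))"
  assumes "R > 0" and "norm x \<noteq> R"
  shows "(\<forall>b::real.
            F (complex_of_real (real k / 2) + \<i> * complex_of_real b) =
            complex_of_real (integral\<^sup>L (sphere_measure R)
               (\<lambda>y. omega x y powr (real k / 2) * cos (b * ln (omega x y)))))
       \<and> (\<forall>(b::real) (m::nat).
            integral\<^sup>L (sphere_measure R)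
               (\<lambda>y. omega x y powr (real k / 2) * (ln (omega x y)) ^ (2 * m + 1)
                      * cos (b * ln (omega x y))) = 0
          \<and> integral\<^sup>L (sphere_measure R)
               (\<lambda>y. omega x y powr (real k / 2) * (ln (omega x y)) ^ (2 * m)
                      * sin (b * ln (omega x y))) = 0)
       \<and> F holomorphic_on UNIV
       \<and> (\<forall>\<alpha>::complex.
            (\<lambda>m. (\<alpha> - complex_of_real (real k / 2)) ^ (2 * m) / of_nat (fact (2 * m))
                 * complex_of_real (integral\<^sup>L (sphere_measure R)
                     (\<lambda>y. omega x y powr (real k / 2) * (ln (omega x y)) ^ (2 * m))))
            sums F \<alpha>)"
proof -
  have R: "R > 0" and xR: "norm x \<noteq> R" using assms by auto
  define s where "s = real k / 2"
  have s': "s = real (DIM('a) - 1) / 2" unfolding s_def k_def ..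
  have pos: "\<And>y. y \<in> space (sphere_measure R) \<Longrightarrow> omega x y > 0"
    using omega_pos xR by (auto simp: space_sm)
  have cont: "\<And>h. continuous_on UNIV h \<Longrightarrow> continuous_on (sphere 0 R) (\<lambda>y. omega x y powr s * h (ln (omega x y)))"
    using cont_comp_omega[OF xR] by blast
  have oddI: "\<And>h. continuous_on UNIV h \<Longrightarrow> (\<And>t. h (- t) = - h t) \<Longrightarrow>
      integral\<^sup>L (sphere_measure R) (\<lambda>y. omega x y powr s * h (ln (omega x y))) = 0"
    using odd_sm[OF R xR] unfolding s' by blast
  have intC: "\<And>h (c::complex). continuous_on UNIV h \<Longrightarrow>
      integrable (sphere_measure R) (\<lambda>y. c * complex_of_real (omega x y powr s * h (ln (omega x y))))"
    by (rule integrable_sm[OF R]) (intro continuous_intros cont)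
  have P1: "F (complex_of_real (real k / 2) + \<i> * complex_of_real b) =
            complex_of_real (integral\<^sup>L (sphere_measure R)
               (\<lambda>y. omega x y powr (real k / 2) * cos (b * ln (omega x y))))" for b
  proof -
    have c1: "continuous_on UNIV (\<lambda>t. cos (b * t))" by (intro continuous_intros)
    have c2: "continuous_on UNIV (\<lambda>t. sin (b * t))" by (intro continuous_intros)
    have "F (complex_of_real s + \<i> * complex_of_real b) = integral\<^sup>L (sphere_measure R)
        (\<lambda>y. 1 * complex_of_real (omega x y powr s * cos (b * ln (omega x y))) +
             \<i> * complex_of_real (omega x y powr s * sin (b * ln (omega x y))))"
      unfolding F_def by (rule Bochner_Integration.integral_cong) (simp_all add: cpow_split pos)
    also have "\<dots> = complex_of_real (integral\<^sup>L (sphere_measure R) (\<lambda>y. omega x y powr s * cos (b * ln (omega x y))))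
        + \<i> * complex_of_real (integral\<^sup>L (sphere_measure R) (\<lambda>y. omega x y powr s * sin (b * ln (omega x y))))"
      by (subst Bochner_Integration.integral_add[OF intC[OF c1, of 1] intC[OF c2, of \<i>]])
         (simp only: mult_1_left integral_mult_right_zero integral_complex_of_real)
    also have "integral\<^sup>L (sphere_measure R) (\<lambda>y. omega x y powr s * sin (b * ln (omega x y))) = 0"
      by (rule oddI[OF c2]) simp
    finally show ?thesis unfolding s_def by simp
  qed
  have P2: "integral\<^sup>L (sphere_measure R)
               (\<lambda>y. omega x y powr (real k / 2) * (ln (omega x y)) ^ (2 * m + 1)
                      * cos (b * ln (omega x y))) = 0
          \<and> integral\<^sup>L (sphere_measure R)
               (\<lambda>y. omega x y powr (real k / 2) * (ln (omega x y)) ^ (2 * m)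
                      * sin (b * ln (omega x y))) = 0" for b m
  proof
    have c1: "continuous_on UNIV (\<lambda>t. t ^ (2 * m + 1) * cos (b * t))" by (intro continuous_intros)
    have c2: "continuous_on UNIV (\<lambda>t. t ^ (2 * m) * sin (b * t))" by (intro continuous_intros)
    show "integral\<^sup>L (sphere_measure R)
               (\<lambda>y. omega x y powr (real k / 2) * (ln (omega x y)) ^ (2 * m + 1)
                      * cos (b * ln (omega x y))) = 0"
      using oddI[OF c1] unfolding s_def by (simp add: mult.assoc)
    show "integral\<^sup>L (sphere_measure R)
               (\<lambda>y. omega x y powr (real k / 2) * (ln (omega x y)) ^ (2 * m)
                      * sin (b * ln (omega x y))) = 0"
      using oddI[OF c2] unfolding s_def by (simp add: mult.assoc)
  qed
  define a where "a = (\<lambda>j. integral\<^sup>L (sphere_measure R) (\<lambda>y. omega x y powr s * (ln (omega x y)) ^ j))"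
  have S: "(\<lambda>j. (\<alpha> - complex_of_real s) ^ j / of_nat (fact j) * complex_of_real (a j)) sums F \<alpha>" for \<alpha>
  proof -
    interpret fm: finite_measure "sphere_measure R :: 'a measure" by (rule finite_sm[OF R])
    define z where "z = \<alpha> - complex_of_real s"
    define f where "f = (\<lambda>j y. z ^ j / of_nat (fact j) * complex_of_real (omega x y powr s * ln (omega x y) ^ j))"
    have intf: "integrable (sphere_measure R) (f j)" for j
      unfolding f_def by (rule intC) (intro continuous_intros)
    have cP: "continuous_on (sphere 0 R) (\<lambda>y. omega x y powr s)"
      using cont[of "\<lambda>_. 1"] by simp
    have posS: "\<And>y. y \<in> sphere 0 R \<Longrightarrow> omega x y > 0" using pos by (simp add: space_sm)
    have cL: "continuous_on (sphere 0 R) (\<lambda>y. ln (omega x y))"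
      by (intro continuous_on_ln omega_cont[OF xR]) (use posS in force)
    obtain PM where PM: "\<And>y. y \<in> sphere 0 R \<Longrightarrow> \<bar>omega x y powr s\<bar> \<le> PM"
      using compact_imp_bounded[OF compact_continuous_image[OF cP compact_sphere]]
      unfolding bounded_iff by (auto simp: real_norm_def) (metis mem_sphere_0)
    obtain LM where LM: "\<And>y. y \<in> sphere 0 R \<Longrightarrow> \<bar>ln (omega x y)\<bar> \<le> LM"
      using compact_imp_bounded[OF compact_continuous_image[OF cL compact_sphere]]
      unfolding bounded_iff by (auto simp: real_norm_def) (metis mem_sphere_0)
    have nf: "norm (f j y) = \<bar>omega x y powr s\<bar> * (inverse (fact j) * (norm z * \<bar>ln (omega x y)\<bar>) ^ j)" for j y
      unfolding f_def by (simp add: norm_mult norm_divide norm_power abs_mult power_abs power_mult_distrib field_simps)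
    have AEs: "AE y in sphere_measure R. summable (\<lambda>j. norm (f j y))"
      unfolding nf by (intro AE_I2 summable_mult summable_exp)
    define g where "g = (\<lambda>j. measure (sphere_measure R :: 'a measure) (space (sphere_measure R)) * (PM * (inverse (fact j) * (norm z * LM) ^ j)))"
    have sg: "summable g" unfolding g_def by (intro summable_mult summable_exp)
    have bnd: "norm (f j y) \<le> PM * (inverse (fact j) * (norm z * LM) ^ j)" if "y \<in> space (sphere_measure R)" for j y
    proof -
      have y: "y \<in> sphere 0 R" using that by (simp add: space_sm)
      have "(norm z * \<bar>ln (omega x y)\<bar>) ^ j \<le> (norm z * LM) ^ j"
        by (intro power_mono mult_left_mono LM[OF y]) auto
      then have "inverse (fact j) * (norm z * \<bar>ln (omega x y)\<bar>) ^ j \<le> inverse (fact j) * (norm z * LM) ^ j"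
        by (intro mult_left_mono) auto
      moreover have "\<bar>omega x y powr s\<bar> \<le> PM" by (rule PM[OF y])
      moreover have "0 \<le> PM" using PM[OF y] by linarith
      ultimately show ?thesis unfolding nf
        by (intro mult_mono) auto
    qed
    have ssum: "summable (\<lambda>j. \<integral>y. norm (f j y) \<partial>sphere_measure R)"
    proof (rule summable_comparison_test'[OF sg])
      fix j
      have "(\<integral>y. norm (f j y) \<partial>sphere_measure R) \<le> (\<integral>y. PM * (inverse (fact j) * (norm z * LM) ^ j) \<partial>(sphere_measure R :: 'a measure))"
        by (rule Bochner_Integration.integral_mono[OF integrable_norm[OF intf] fm.integrable_const]) (use bnd in auto)
      then show "norm (\<integral>y. norm (f j y) \<partial>sphere_measure R) \<le> g j"
        unfolding g_def by simp
    qed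
    note SI = sums_integral[OF intf AEs ssum]
    have "(\<integral>y. (\<Sum>j. f j y) \<partial>sphere_measure R) = F \<alpha>"
      unfolding F_def
    proof (rule Bochner_Integration.integral_cong)
      fix y :: 'a assume "y \<in> space (sphere_measure R)"
      then show "(\<Sum>j. f j y) = cpow_pos (omega x y) \<alpha>"
        using sums_unique[OF cpow_series[OF pos, of _ \<alpha> s]] unfolding f_def z_def by simp
    qed simp
    moreover have "integral\<^sup>L (sphere_measure R) (f j) = z ^ j / of_nat (fact j) * complex_of_real (a j)" for j
      unfolding f_def a_def by (simp only: integral_mult_right_zero integral_complex_of_real)
    ultimately show ?thesis using SI unfolding z_def by simp
  qed
  have aodd: "a (2 * m + 1) = 0" for m
    unfolding a_def by (rule oddI) (auto intro!: continuous_intros)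
  have P4: "(\<lambda>m. (\<alpha> - complex_of_real (real k / 2)) ^ (2 * m) / of_nat (fact (2 * m))
                 * complex_of_real (integral\<^sup>L (sphere_measure R)
                     (\<lambda>y. omega x y powr (real k / 2) * (ln (omega x y)) ^ (2 * m))))
            sums F \<alpha>" for \<alpha>
  proof -
    have "(\<lambda>m. (\<lambda>j. (\<alpha> - complex_of_real s) ^ j / of_nat (fact j) * complex_of_real (a j)) (2 * m)) sums F \<alpha>"
    proof (subst sums_mono_reindex)
      show "strict_mono (\<lambda>m::nat. 2 * m)" by (rule strict_monoI) simp
      show "(\<lambda>j. (\<alpha> - complex_of_real s) ^ j / of_nat (fact j) * complex_of_real (a j)) n = 0"
        if "n \<notin> range (\<lambda>m. 2 * m)" for n
      proof -
        have "odd n" using that by (metis evenE rangeI)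
        then obtain m where "n = 2 * m + 1" by (metis oddE)
        then show ?thesis using aodd by simp
      qed
    qed (rule S)
    then show ?thesis unfolding a_def s_def by simp
  qed
  define cc where "cc = (\<lambda>j. complex_of_real (a j) / of_nat (fact j))"
  have S2: "(\<lambda>n. cc n * w ^ n) sums F (w + complex_of_real s)" for w
    using S[of "w + complex_of_real s"] unfolding cc_def by (simp add: field_simps)
  have Feq: "F = (\<lambda>\<alpha>. (\<Sum>n. cc n * (\<alpha> - complex_of_real s) ^ n))"
  proof
    fix \<alpha> show "F \<alpha> = (\<Sum>n. cc n * (\<alpha> - complex_of_real s) ^ n)"
      using sums_unique[OF S2[of "\<alpha> - complex_of_real s"]] by simp
  qed
  have H: "F holomorphic_on UNIV"
  proof (rule holomorphic_onI)
    fix \<alpha> :: complex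
    have summ: "\<And>y. summable (\<lambda>n. cc n * y ^ n)" using S2 sums_summable by blast
    have d1: "((\<lambda>w. \<Sum>n. cc n * w ^ n) has_field_derivative (\<Sum>n. diffs cc n * (\<alpha> - complex_of_real s) ^ n))
        (at (\<alpha> - complex_of_real s))"
      by (rule termdiffs_strong_converges_everywhere[OF summ])
    have d2: "((\<lambda>\<alpha>. \<alpha> - complex_of_real s) has_field_derivative 1) (at \<alpha>)"
      by (auto intro!: derivative_eq_intros)
    have "(F has_field_derivative (\<Sum>n. diffs cc n * (\<alpha> - complex_of_real s) ^ n) * 1) (at \<alpha>)"
      unfolding Feq using DERIV_chain2[OF d1 d2] .
    then have "F field_differentiable (at \<alpha>)" unfolding field_differentiable_def by blast
    then show "F field_differentiable (at \<alpha> within UNIV)" by simp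
  qed
  show ?thesis using P1 P2 H P4 by blast
qed


end
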